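(* Let $A$ be an evolution algebra (finite or infinite dimensional) over a commutative ring $R$ with basis $\{x_i:i\in I\}$ and structure coefficients $c_{ki}$. Let $n\ge 2$. Then $A^n=(0)$ if and only if for every sequence of indices $i_1,i_2,\dots,i_n\in I$, $$c_{i_ni_{n-1}}c_{i_{n-1}i_{n-2}}\cdots c_{i_2i_1}=0.$$ In particular, $A$ is nilpotent if and only if there is $n$ for which this holds for all such sequences.
   Context: An evolution algebra over a commutative ring $R$ is a free $R$-module $A$ with basis $\{x_i:i\in I\}$ equipped with the $R$-bilinear multiplication determined by $x_ix_j=0$ for $i\ne j$ and $x_i^2=\sum_{k\in I}c_{ki}x_k$ with $c_{ki}\in R$ (finitely many nonzero for each $i$). The principal powers of $A$ are $A^1=A$ and $A^n=A^{n-1}A$, the $R$-span of all products $uv$ with $u\in A^{n-1}$, $v\in A$. $A$ is nilpotent if $A^n=(0)$ for some $n\in\mathbb{N}$. *)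

theory Defs
  imports Main
begin

text \<open>An evolution algebra over a commutative ring 'r with basis indexed by the type 'i
  is modelled as the free module of finitely supported functions 'i \<Rightarrow> 'r
  (the coordinate vectors w.r.t. the basis x_i). The structure coefficients are
  c k i (coefficient of x_k in x_i^2), finitely many nonzero for each i.\<close>

definition ev_elems :: "('i \<Rightarrow> 'r::comm_ring_1) set" where
  "ev_elems = {u. finite {i. u i \<noteq> 0}}"

definition ev_coeffs_ok :: "('i \<Rightarrow> 'i \<Rightarrow> 'r::comm_ring_1) \<Rightarrow> bool" where
  "ev_coeffs_ok c \<longleftrightarrow> (\<forall>i. finite {k. c k i \<noteq> 0})"

text \<open>Bilinear product: x_i x_j = 0 for i \<noteq> j, x_i^2 = sum_k c k i x_k.\<close>
definition ev_mult :: "('i \<Rightarrow> 'i \<Rightarrow> 'r::comm_ring_1) \<Rightarrow> ('i \<Rightarrow> 'r) \<Rightarrow> ('i \<Rightarrow> 'r) \<Rightarrow> ('i \<Rightarrow> 'r)" where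
  "ev_mult c u v = (\<lambda>k. \<Sum>i\<in>{i. u i \<noteq> 0}. u i * v i * c k i)"

definition ev_span :: "('i \<Rightarrow> 'r::comm_ring_1) set \<Rightarrow> ('i \<Rightarrow> 'r) set" where
  "ev_span S = {w. \<exists>F a. finite F \<and> F \<subseteq> S \<and> w = (\<lambda>k. \<Sum>s\<in>F. a s * s k)}"

text \<open>Principal powers: A^1 = A, A^(n+1) = span of products u v, u in A^n, v in A.
  (The value at 0 is a junk value, equal to A.)\<close>
fun ev_pow :: "('i \<Rightarrow> 'i \<Rightarrow> 'r::comm_ring_1) \<Rightarrow> nat \<Rightarrow> ('i \<Rightarrow> 'r) set" where
  "ev_pow c 0 = ev_elems"
| "ev_pow c (Suc 0) = ev_elems"
| "ev_pow c (Suc (Suc n)) =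
     ev_span {ev_mult c u v | u v. u \<in> ev_pow c (Suc n) \<and> v \<in> ev_elems}"

definition ev_nilpotent :: "('i \<Rightarrow> 'i \<Rightarrow> 'r::comm_ring_1) \<Rightarrow> bool" where
  "ev_nilpotent c \<longleftrightarrow> (\<exists>n\<ge>1. ev_pow c n = {\<lambda>_. 0})"

end

theory Submission
  imports Defs
begin

definition ee :: "'i \<Rightarrow> ('i \<Rightarrow> 'r::comm_ring_1)" where
  "ee j = (\<lambda>i. if i = j then 1 else 0)"

lemma ee_elems: "(ee j :: 'i \<Rightarrow> 'r::comm_ring_1) \<in> ev_elems"
proof -
  have "{i. ee j i \<noteq> (0::'r)} \<subseteq> {j}" by (auto simp: ee_def)
  then show ?thesis unfolding ev_elems_def by (auto intro: finite_subset)
qed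

lemma mult_single:
  assumes "finite {i. u i \<noteq> 0}"
  shows "ev_mult c u (ee j) = (\<lambda>k. u j * c k j)"
proof
  fix k
  have "ev_mult c u (ee j) k = (\<Sum>i\<in>{i. u i \<noteq> 0}. if i = j then u i * c k i else 0)"
    unfolding ev_mult_def ee_def by (rule sum.cong) auto
  also have "\<dots> = (if j \<in> {i. u i \<noteq> 0} then u j * c k j else 0)"
    using assms by (simp add: sum.delta')
  also have "\<dots> = u j * c k j" by auto
  finally show "ev_mult c u (ee j) k = u j * c k j" .
qed

lemma span_mem: "p \<in> S \<Longrightarrow> p \<in> ev_span S"
  unfolding ev_span_def
  by (rule CollectI, rule exI[of _ "{p}"], rule exI[of _ "\<lambda>_. 1"]) auto

lemma zero_pow: "(\<lambda>_. 0) \<in> ev_pow c n"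
proof -
  have z: "(\<lambda>_. 0) \<in> ev_span S" for S :: "('i \<Rightarrow> 'r::comm_ring_1) set"
    unfolding ev_span_def
    by (intro CollectI exI[of _ "{}"] exI[of _ "\<lambda>_. 1"]) auto
  show ?thesis
  proof (cases n)
    case (Suc k) then show ?thesis
      by (cases k) (auto simp: ev_elems_def z)
  qed (auto simp: ev_elems_def)
qed

lemma chain_elem:
  fixes c :: "'i \<Rightarrow> 'i \<Rightarrow> 'r::comm_ring_1" and s :: "nat \<Rightarrow> 'i"
  assumes ok: "ev_coeffs_ok c" and m: "m \<ge> 1"
  shows "(\<lambda>k. (\<Prod>j\<in>{1..<m}. c (s (Suc j)) (s j)) * c k (s m)) \<in> ev_pow c (Suc m)"
  using m
proof (induction m rule: dec_induct)
  case base
  have fin: "finite {i. ee (s 1) i \<noteq> (0::'r)}" using ee_elems unfolding ev_elems_def by auto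
  have "ev_mult c (ee (s 1)) (ee (s 1)) = (\<lambda>k. c k (s 1))"
    by (simp only: mult_single[OF fin]) (simp add: ee_def)
  moreover have "ev_mult c (ee (s 1)) (ee (s 1)) \<in> ev_pow c (Suc 1)"
  proof -
    have "ev_mult c (ee (s 1)) (ee (s 1)) \<in> {ev_mult c u v | u v. u \<in> ev_pow c (Suc 0) \<and> v \<in> ev_elems}"
      by (rule CollectI, intro exI conjI) (rule refl, simp add: ee_elems, rule ee_elems)
    then show ?thesis by (simp add: span_mem)
  qed
  ultimately show ?case by simp
next
  case (step m)
  define u where "u = (\<lambda>k. (\<Prod>j\<in>{1..<m}. c (s (Suc j)) (s j)) * c k (s m))"
  have fin: "finite {i. u i \<noteq> 0}"
  proof -
    have "{i. u i \<noteq> 0} \<subseteq> {k. c k (s m) \<noteq> 0}" unfolding u_def by auto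
    then show ?thesis using ok unfolding ev_coeffs_ok_def by (auto intro: finite_subset)
  qed
  have P: "(\<Prod>j\<in>{1..<Suc m}. c (s (Suc j)) (s j)) =
      (\<Prod>j\<in>{1..<m}. c (s (Suc j)) (s j)) * c (s (Suc m)) (s m)"
    using step.hyps by (simp add: prod.atLeastLessThan_Suc)
  have "ev_mult c u (ee (s (Suc m))) =
     (\<lambda>k. (\<Prod>j\<in>{1..<Suc m}. c (s (Suc j)) (s j)) * c k (s (Suc m)))"
    by (simp only: mult_single[OF fin]) (use step.hyps in \<open>simp add: u_def P\<close>)
  moreover have "ev_mult c u (ee (s (Suc m))) \<in> ev_pow c (Suc (Suc m))"
  proof -
    have U: "u \<in> ev_pow c (Suc m)" using step.IH unfolding u_def .
    have "ev_mult c u (ee (s (Suc m))) \<in> {ev_mult c u v | u v. u \<in> ev_pow c (Suc m) \<and> v \<in> ev_elems}"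
      by (rule CollectI, intro exI conjI) (rule refl, rule U, rule ee_elems)
    then show ?thesis by (simp add: span_mem)
  qed
  ultimately show ?case by simp
qed

lemma vanish:
  fixes c :: "'i \<Rightarrow> 'i \<Rightarrow> 'r::comm_ring_1"
  assumes H: "\<forall>s :: nat \<Rightarrow> 'i. (\<Prod>j\<in>{1..<n}. c (s (Suc j)) (s j)) = 0"
  shows "Suc m \<le> n \<Longrightarrow> w \<in> ev_pow c (Suc m) \<Longrightarrow>
     \<forall>s. w (s (Suc m)) * (\<Prod>j\<in>{Suc m..<n}. c (s (Suc j)) (s j)) = 0"
proof (induction m arbitrary: w)
  case 0
  show ?case
  proof
    fix s :: "nat \<Rightarrow> 'i"
    show "w (s (Suc 0)) * (\<Prod>j\<in>{Suc 0..<n}. c (s (Suc j)) (s j)) = 0"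
      using H by simp
  qed
next
  case (Suc m)
  from Suc.prems(2) obtain F a where F: "finite F"
    "F \<subseteq> {ev_mult c u v | u v. u \<in> ev_pow c (Suc m) \<and> v \<in> ev_elems}"
    and w: "w = (\<lambda>k. \<Sum>p\<in>F. a p * p k)"
    by (auto simp: ev_span_def)
  show ?case
  proof
    fix s :: "nat \<Rightarrow> 'i"
    let ?Q = "\<Prod>j\<in>{Suc (Suc m)..<n}. c (s (Suc j)) (s j)"
    have each: "p (s (Suc (Suc m))) * ?Q = 0" if "p \<in> F" for p
    proof -
      obtain u v where p: "p = ev_mult c u v" and u: "u \<in> ev_pow c (Suc m)"
        using F(2) \<open>p \<in> F\<close> by auto
      have IH: "\<forall>s. u (s (Suc m)) * (\<Prod>j\<in>{Suc m..<n}. c (s (Suc j)) (s j)) = 0"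
        using Suc.IH[OF _ u] Suc.prems(1) by simp
      have t: "u i * c (s (Suc (Suc m))) i * ?Q = 0" for i
      proof -
        let ?s = "s(Suc m := i)"
        have "(\<Prod>j\<in>{Suc m..<n}. c (?s (Suc j)) (?s j)) =
            c (s (Suc (Suc m))) i * (\<Prod>j\<in>{Suc (Suc m)..<n}. c (?s (Suc j)) (?s j))"
          using Suc.prems(1) by (simp add: prod.atLeast_Suc_lessThan)
        also have "(\<Prod>j\<in>{Suc (Suc m)..<n}. c (?s (Suc j)) (?s j)) = ?Q"
          by (rule prod.cong) auto
        finally have "(\<Prod>j\<in>{Suc m..<n}. c (?s (Suc j)) (?s j)) = c (s (Suc (Suc m))) i * ?Q" .
        moreover have "u (?s (Suc m)) * (\<Prod>j\<in>{Suc m..<n}. c (?s (Suc j)) (?s j)) = 0"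
          using IH by blast
        ultimately show ?thesis by (simp add: mult.assoc)
      qed
      have "p (s (Suc (Suc m))) * ?Q =
          (\<Sum>i\<in>{i. u i \<noteq> 0}. v i * (u i * c (s (Suc (Suc m))) i * ?Q))"
        unfolding p ev_mult_def by (simp add: sum_distrib_right sum_distrib_left mult.assoc mult.left_commute)
      also have "\<dots> = 0" using t by simp
      finally show ?thesis .
    qed
    have "w (s (Suc (Suc m))) * ?Q = (\<Sum>p\<in>F. a p * (p (s (Suc (Suc m))) * ?Q))"
      unfolding w by (simp add: sum_distrib_right algebra_simps)
    also have "\<dots> = 0" using each by simp
    finally show "w (s (Suc (Suc m))) * ?Q = 0" .
  qed
qed

lemma part1:
  fixes c :: "'i \<Rightarrow> 'i \<Rightarrow> 'r::comm_ring_1" and n :: nat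
  assumes ok: "ev_coeffs_ok c" and n: "n \<ge> 2"
  shows "ev_pow c n = {\<lambda>_. 0} \<longleftrightarrow>
           (\<forall>s :: nat \<Rightarrow> 'i. (\<Prod>j\<in>{1..<n}. c (s (Suc j)) (s j)) = 0)"
proof
  assume Z: "ev_pow c n = {\<lambda>_. 0}"
  show "\<forall>s :: nat \<Rightarrow> 'i. (\<Prod>j\<in>{1..<n}. c (s (Suc j)) (s j)) = 0"
  proof
    fix s :: "nat \<Rightarrow> 'i"
    obtain m where nm: "n = Suc (Suc m)" using n by (metis add_2_eq_Suc le_Suc_ex)
    have "(\<lambda>k. (\<Prod>j\<in>{1..<Suc m}. c (s (Suc j)) (s j)) * c k (s (Suc m))) \<in> ev_pow c n"
      using chain_elem[OF ok, of "Suc m" s] nm by simp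
    then have "(\<Prod>j\<in>{1..<Suc m}. c (s (Suc j)) (s j)) * c (s n) (s (Suc m)) = 0"
      using Z by (metis (mono_tags) singletonD)
    then show "(\<Prod>j\<in>{1..<n}. c (s (Suc j)) (s j)) = 0"
      by (simp add: nm prod.atLeastLessThan_Suc)
  qed
next
  assume H: "\<forall>s :: nat \<Rightarrow> 'i. (\<Prod>j\<in>{1..<n}. c (s (Suc j)) (s j)) = 0"
  obtain m where nm: "n = Suc m" using n by (cases n) auto
  show "ev_pow c n = {\<lambda>_. 0}"
  proof (intro equalityI subsetI)
    fix w assume "w \<in> ev_pow c n"
    then have "\<forall>s. w (s (Suc m)) * (\<Prod>j\<in>{Suc m..<n}. c (s (Suc j)) (s j)) = 0"
      using vanish[OF H, of m w] nm by simp
    then have "w k = 0" for k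
      using spec[of _ "\<lambda>_. k"] nm by auto
    then show "w \<in> {\<lambda>_. 0}" by auto
  qed (use zero_pow in auto)
qed

theorem theorem2p6:
  fixes c :: "'i \<Rightarrow> 'i \<Rightarrow> 'r::comm_ring_1" and n :: nat
  assumes "ev_coeffs_ok c" and "n \<ge> 2"
  shows "(ev_pow c n = {\<lambda>_. 0} \<longleftrightarrow>
           (\<forall>s :: nat \<Rightarrow> 'i. (\<Prod>j\<in>{1..<n}. c (s (Suc j)) (s j)) = 0))
       \<and> (ev_nilpotent c \<longleftrightarrow>
           (\<exists>m. \<forall>s :: nat \<Rightarrow> 'i. (\<Prod>j\<in>{1..<m}. c (s (Suc j)) (s j)) = 0))"
proof
  show "ev_pow c n = {\<lambda>_. 0} \<longleftrightarrow>
           (\<forall>s :: nat \<Rightarrow> 'i. (\<Prod>j\<in>{1..<n}. c (s (Suc j)) (s j)) = 0)"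
    by (rule part1[OF assms])
  show "ev_nilpotent c \<longleftrightarrow>
           (\<exists>m. \<forall>s :: nat \<Rightarrow> 'i. (\<Prod>j\<in>{1..<m}. c (s (Suc j)) (s j)) = 0)"
  proof
    assume "ev_nilpotent c"
    then obtain k where k: "k \<ge> 1" "ev_pow c k = {\<lambda>_. 0}" by (auto simp: ev_nilpotent_def)
    show "\<exists>m. \<forall>s :: nat \<Rightarrow> 'i. (\<Prod>j\<in>{1..<m}. c (s (Suc j)) (s j)) = 0"
    proof (cases "k \<ge> 2")
      case True then show ?thesis using part1[OF assms(1) True] k by blast
    next
      case False
      then have "k = Suc 0" using k by auto
      then have "(ee undefined :: 'i \<Rightarrow> 'r) \<in> {\<lambda>_. (0::'r)}" using k ee_elems by (metis ev_pow.simps(2))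
      then have "(1::'r) = 0" by (metis ee_def singletonD)
      then show ?thesis by (intro exI[of _ 0]) simp
    qed
  next
    assume "\<exists>m. \<forall>s :: nat \<Rightarrow> 'i. (\<Prod>j\<in>{1..<m}. c (s (Suc j)) (s j)) = 0"
    then obtain m where m: "\<forall>s :: nat \<Rightarrow> 'i. (\<Prod>j\<in>{1..<m}. c (s (Suc j)) (s j)) = 0" by blast
    show "ev_nilpotent c"
    proof (cases "m \<ge> 2")
      case True then show ?thesis using part1[OF assms(1) True] m
        unfolding ev_nilpotent_def by (metis le_trans one_le_numeral)
    next
      case False
      then have "(1::'r) = 0" using m by auto
      then have "\<forall>x::'r. x = 0" by (metis mult_1 mult_zero_left)
      then have "ev_pow c (Suc 0) = {\<lambda>_. 0}" by (auto simp: ev_elems_def)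
      then show ?thesis unfolding ev_nilpotent_def by (metis le_refl One_nat_def)
    qed
  qed
qed

end
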